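(* Let $\epsilon_0,\epsilon_\theta\in[0,1]$ and $\theta\in\mathbb R$. If $\epsilon_0+\epsilon_\theta\ge 1$, then $\mathsf Q_0^{\rm prono}$ (noise $\epsilon_0$) and $\mathsf Q_\theta^{\rm prono}$ (noise $\epsilon_\theta$) are jointly measurable.
   Context: All operators act on $\mathbb C^2$. For $\varphi\in\mathbb R$ and noise $\delta\in[0,1]$, the noisy projected quadrature POVM on Borel sets $X\subseteq\mathbb R$ is $$\mathsf Q_\varphi^{\rm prono}(X)=\int_X\begin{pmatrix}1&(1-\delta)\sqrt2\,x\,e^{-i\varphi}\\(1-\delta)\sqrt2\,x\,e^{i\varphi}&(1-\delta)2x^2+\delta\end{pmatrix}\frac{e^{-x^2}\,dx}{\sqrt\pi}.$$ Two POVMs $\mathsf E$, $\mathsf B$ on $\mathbb R$ are jointly measurable if there is a POVM $\mathsf G$ on $\mathbb R^2$ with $\mathsf G(X\times\mathbb R)=\mathsf E(X)$ and $\mathsf G(\mathbb R\times Y)=\mathsf B(Y)$ for all Borel $X,Y$. *)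

theory Defs
  imports "HOL-Analysis.Analysis"
begin

text \<open>2x2 complex matrices are modelled as complex^2^2 (rows indexed first).
  The index type 2 has the two elements 1 and 0 (=2); row/column 1 is the first one.\<close>

definition mat2 :: "complex \<Rightarrow> complex \<Rightarrow> complex \<Rightarrow> complex \<Rightarrow> complex^2^2" where
  "mat2 a b c d = (\<chi> i j. if i = 1 then (if j = 1 then a else b) else (if j = 1 then c else d))"

definition psd :: "complex^2^2 \<Rightarrow> bool" where
  "psd A \<longleftrightarrow> (\<forall>v::complex^2. Im (\<Sum>i\<in>UNIV. cnj (v $ i) * (A *v v) $ i) = 0
                              \<and> 0 \<le> Re (\<Sum>i\<in>UNIV. cnj (v $ i) * (A *v v) $ i))"

definition povm :: "'a measure \<Rightarrow> ('a set \<Rightarrow> complex^2^2) \<Rightarrow> bool" where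
  "povm M E \<longleftrightarrow>
     (\<forall>X\<in>sets M. psd (E X)) \<and> E (space M) = mat 1 \<and>
     (\<forall>A::nat \<Rightarrow> 'a set. range A \<subseteq> sets M \<longrightarrow> disjoint_family A \<longrightarrow>
        (\<lambda>n. E (A n)) sums E (\<Union>n. A n))"

definition jointly_measurable :: "(real set \<Rightarrow> complex^2^2) \<Rightarrow> (real set \<Rightarrow> complex^2^2) \<Rightarrow> bool" where
  "jointly_measurable E B \<longleftrightarrow>
     (\<exists>G :: (real \<times> real) set \<Rightarrow> complex^2^2.
        povm (borel :: (real \<times> real) measure) G \<and>
        (\<forall>X\<in>sets (borel :: real measure). G (X \<times> UNIV) = E X) \<and>
        (\<forall>Y\<in>sets (borel :: real measure). G (UNIV \<times> Y) = B Y))"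

definition qdens :: "real \<Rightarrow> real \<Rightarrow> real \<Rightarrow> complex^2^2" where
  "qdens \<delta> \<phi> x = (exp (- x\<^sup>2) / sqrt pi) *\<^sub>R
     mat2 1
          (complex_of_real ((1 - \<delta>) * sqrt 2 * x) * exp (- \<i> * complex_of_real \<phi>))
          (complex_of_real ((1 - \<delta>) * sqrt 2 * x) * exp (\<i> * complex_of_real \<phi>))
          (complex_of_real ((1 - \<delta>) * 2 * x\<^sup>2 + \<delta>))"

definition Qprono :: "real \<Rightarrow> real \<Rightarrow> real set \<Rightarrow> complex^2^2" where
  "Qprono \<delta> \<phi> X = (LINT x:X|lborel. qdens \<delta> \<phi> x)"

end

theory Submission imports Defs "HOL-Probability.Probability" begin


definition gm :: "real \<Rightarrow> real" where "gm x = exp (- x\<^sup>2) / sqrt pi"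

lemma gm_nd: "gm x = normal_density 0 (1/sqrt 2) x"
  by (simp add: gm_def normal_density_def power_divide)

lemma hb0: "has_bochner_integral lborel (\<lambda>x. gm x) 1"
  using normal_moment_even[of "1/sqrt 2" 0 0] by (simp add: gm_nd)

lemma hb1: "has_bochner_integral lborel (\<lambda>x. gm x * x) 0"
  using normal_moment_odd[of "1/sqrt 2" 0 0] by (simp add: gm_nd)

lemma hb2: "has_bochner_integral lborel (\<lambda>x. gm x * x\<^sup>2) (1/2)"
  using normal_moment_even[of "1/sqrt 2" 0 1] by (simp add: gm_nd power_divide)

lemma hb_prod:
  fixes f g :: "real \<Rightarrow> real"
  assumes f: "has_bochner_integral lborel f a" and g: "has_bochner_integral lborel g b"
  shows "has_bochner_integral (lborel \<Otimes>\<^sub>M lborel) (\<lambda>p. f (fst p) * g (snd p)) (a * b)"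
proof -
  have fi: "integrable lborel f" and gi: "integrable lborel g"
    using f g by (auto simp: has_bochner_integral_iff)
  have [measurable]: "f \<in> borel_measurable lborel" "g \<in> borel_measurable lborel"
    using fi gi by auto
  have int: "integrable (lborel \<Otimes>\<^sub>M lborel) (\<lambda>p. f (fst p) * g (snd p))"
  proof (rule lborel_pair.Fubini_integrable)
    show "(\<lambda>p. f (fst p) * g (snd p)) \<in> borel_measurable (lborel \<Otimes>\<^sub>M lborel)"
      by measurable
    have "integrable lborel (\<lambda>x. norm (f x) * (\<integral>y. norm (g y) \<partial>lborel))"
      using fi by (intro integrable_mult_left integrable_norm)
    then show "integrable lborel (\<lambda>x. \<integral>y. norm (f (fst (x, y)) * g (snd (x, y))) \<partial>lborel)"
      by (simp add: abs_mult)
    show "AE x in lborel. integrable lborel (\<lambda>y. f (fst (x, y)) * g (snd (x, y)))"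
      using gi by (auto intro!: integrable_mult_right)
  qed
  have "integral\<^sup>L (lborel \<Otimes>\<^sub>M lborel) (\<lambda>p. f (fst p) * g (snd p))
      = (\<integral>x. (\<integral>y. f x * g y \<partial>lborel) \<partial>lborel)"
    using lborel_pair.integral_fst[of "\<lambda>x y. f x * g y"] int
    by (simp add: case_prod_beta')
  also have "\<dots> = a * b"
    using f g by (simp add: has_bochner_integral_integral_eq)
  finally show ?thesis using int
    by (metis has_bochner_integral_integrable integrable.simps has_bochner_integral_integral_eq)
qed





lemma mat2_nth[simp]: "mat2 a b c d $ 1 $ 1 = a" "mat2 a b c d $ 1 $ 2 = b"
   "mat2 a b c d $ 2 $ 1 = c" "mat2 a b c d $ 2 $ 2 = d"
  by (simp_all add: mat2_def)

lemma mat2_eq_iff: "A = B \<longleftrightarrow> (A$1$1 = B$1$1 \<and> A$1$2 = B$1$2 \<and> A$2$1 = B$2$1 \<and> A$2$2 = B$2$2)"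
  for A B :: "complex^2^2"
  by (auto simp: vec_eq_iff forall_2)

lemma mat2_add[simp]: "mat2 a b c d + mat2 a' b' c' d' = mat2 (a+a') (b+b') (c+c') (d+d')"
  by (simp add: mat2_eq_iff)

lemma mat2_scaleR[simp]: "r *\<^sub>R mat2 a b c d = mat2 (of_real r*a) (of_real r*b) (of_real r*c) (of_real r*d)"
  by (simp add: mat2_eq_iff scaleR_conv_of_real[where 'a=complex])

lemma mat2_inj[simp]: "mat2 a b c d = mat2 a' b' c' d' \<longleftrightarrow> a=a' \<and> b=b' \<and> c=c' \<and> d=d'"
  by (simp add: mat2_eq_iff)

lemma mat1_mat2: "(mat 1 :: complex^2^2) = mat2 1 0 0 1"
  by (simp add: mat2_eq_iff mat_def)

lemma zero_mat2: "(0 :: complex^2^2) = mat2 0 0 0 0"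
  by (simp add: mat2_eq_iff)

definition qf :: "complex^2 \<Rightarrow> complex^2^2 \<Rightarrow> complex" where
  "qf v A = (\<Sum>i\<in>UNIV. cnj (v $ i) * (A *v v) $ i)"

lemma qf_mat2: "qf v (mat2 a b c d) = cnj (v$1) * (a * v$1 + b * v$2) + cnj (v$2) * (c * v$1 + d * v$2)"
  by (simp add: qf_def sum_2 matrix_vector_mult_def)

lemma qf_bl: "bounded_linear (qf v)"
  unfolding linear_conv_bounded_linear[symmetric]
  by (rule linearI) (simp_all add: qf_def matrix_vector_mult_def sum.distrib sum_distrib_left
     algebra_simps scaleR_conv_of_real[where 'a=complex])

lemma qdens_dec: "qdens \<delta> \<phi> x =
    gm x *\<^sub>R mat2 1 0 0 \<delta>
  + (gm x * x) *\<^sub>R mat2 0 (of_real ((1-\<delta>) * sqrt 2) * exp (- \<i> * of_real \<phi>)) (of_real ((1-\<delta>) * sqrt 2) * exp (\<i> * of_real \<phi>)) 0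
  + (gm x * x\<^sup>2) *\<^sub>R mat2 0 0 0 (of_real (2*(1-\<delta>)))"
proof -
  have "complex_of_real (sqrt pi) \<noteq> 0" by simp
  then show ?thesis by (simp add: qdens_def gm_def field_simps)
qed


lemma key_alg:
  fixes u1 u2 v1 v2 ss EE EEp x y a b MM :: complex
  assumes h1: "ss* ss = 2" and h2: "EE* EEp = 1"
  shows "u1 * (MM * v1 + (MM* x* ((1-a)* ss) + MM* y* ((1-b)* ss)* EEp) * v2)
       + u2 * ((MM* x* ((1-a)* ss) + MM* y* ((1-b)* ss)* EE) * v1 + (MM* x* x* (2* (1-a)) + MM* y* y* (2* (1-b)) + MM* (a+b-1)) * v2)
    = MM * ((1-a)* ((v1 + ss* x* v2)* (u1 + ss* x* u2)) + (1-b)* ((v1+ss* y* EEp* v2)* (u1 + ss* y* EE* u2)) + (a+b-1)* (v1* u1 + v2* u2))"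
proof -
  have h3: "ss* ss* (EE* EEp) = 2" using h1 h2 by simp
  have "MM * ((1-a)* ((v1 + ss* x* v2)* (u1 + ss* x* u2)) + (1-b)* ((v1+ss* y* EEp* v2)* (u1 + ss* y* EE* u2)) + (a+b-1)* (v1* u1 + v2* u2))
    = u1 * (MM * v1 + (MM* x* ((1-a)* ss) + MM* y* ((1-b)* ss)* EEp) * v2)
       + u2 * ((MM* x* ((1-a)* ss) + MM* y* ((1-b)* ss)* EE) * v1 + (MM* x* x* ((ss* ss)* (1-a)) + MM* y* y* ((ss* ss* (EE* EEp))* (1-b)) + MM* (a+b-1)) * v2)"
    by (simp add: algebra_simps)
  then show ?thesis by (simp only: h1 h2 mult_1_right)
qed

definition Bm :: "real \<Rightarrow> real \<Rightarrow> complex^2^2" where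
  "Bm \<delta> \<phi> = mat2 0 (of_real ((1-\<delta>) * sqrt 2) * exp (- \<i> * of_real \<phi>)) (of_real ((1-\<delta>) * sqrt 2) * exp (\<i> * of_real \<phi>)) 0"
definition Dm :: "real \<Rightarrow> complex^2^2" where
  "Dm \<delta> = mat2 0 0 0 (of_real (2*(1-\<delta>)))"

lemma qdens_dec2: "qdens \<delta> \<phi> x = gm x *\<^sub>R mat2 1 0 0 \<delta> + (gm x * x) *\<^sub>R Bm \<delta> \<phi> + (gm x * x\<^sup>2) *\<^sub>R Dm \<delta>"
  unfolding qdens_dec Bm_def Dm_def ..

definition gden :: "real \<Rightarrow> real \<Rightarrow> real \<Rightarrow> real \<times> real \<Rightarrow> complex^2^2" where
  "gden a b t p =
     (gm (fst p) * gm (snd p)) *\<^sub>R mat2 1 0 0 (of_real (a+b-1))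
   + ((gm (fst p) * fst p) * gm (snd p)) *\<^sub>R Bm a 0
   + ((gm (fst p) * (fst p)\<^sup>2) * gm (snd p)) *\<^sub>R Dm a
   + (gm (fst p) * (gm (snd p) * snd p)) *\<^sub>R Bm b t
   + (gm (fst p) * (gm (snd p) * (snd p)\<^sup>2)) *\<^sub>R Dm b"

lemma gm_nonneg: "0 \<le> gm x" by (simp add: gm_def)

lemma norm_sq_c: "w * cnj w = complex_of_real (norm w ^ 2)"
  by (rule complex_norm_square[symmetric])

lemma gden_qf:
  fixes a b t x y :: real
  assumes "0 \<le> a" "a \<le> 1" "0 \<le> b" "b \<le> 1" "1 \<le> a + b"
  shows "Im (qf v (gden a b t (x,y))) = 0 \<and> 0 \<le> Re (qf v (gden a b t (x,y)))"
proof -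
  define ss where "ss = complex_of_real (sqrt 2)"
  define EE where "EE = exp (\<i> * of_real t)"
  define EEp where "EEp = exp (- \<i> * of_real t)"
  define MM where "MM = complex_of_real (gm x * gm y)"
  define w0 where "w0 = v$1 + ss * of_real x * v$2"
  define wt where "wt = v$1 + ss * of_real y * EEp * v$2"
  have h1: "ss* ss = 2" by (simp add: ss_def flip: of_real_mult)
  have h2: "EE* EEp = 1" by (simp add: EE_def EEp_def flip: exp_add)
  have c0: "cnj w0 = cnj (v$1) + ss * of_real x * cnj (v$2)" by (simp add: w0_def ss_def)
  have ct: "cnj wt = cnj (v$1) + ss * of_real y * EE * cnj (v$2)"
    by (simp add: wt_def ss_def EE_def EEp_def exp_cnj)
  have "qf v (gden a b t (x,y)) =
    cnj (v$1) * (MM * v$1 + (MM* of_real x* ((1-of_real a)* ss) + MM* of_real y* ((1-of_real b)* ss)* EEp) * v$2)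
       + cnj (v$2) * ((MM* of_real x* ((1-of_real a)* ss) + MM* of_real y* ((1-of_real b)* ss)* EE) * v$1 + (MM* of_real x* of_real x* (2* (1-of_real a)) + MM* of_real y* of_real y* (2* (1-of_real b)) + MM* (of_real a + of_real b - 1)) * v$2)"
    by (simp add: gden_def Bm_def Dm_def qf_mat2 MM_def ss_def EE_def EEp_def algebra_simps power2_eq_square)
  also have "\<dots> = MM * ((1-of_real a)* (w0* cnj w0) + (1-of_real b)* (wt* cnj wt) + (of_real a + of_real b - 1)* (v$1* cnj (v$1) + v$2* cnj (v$2)))"
    unfolding c0 ct unfolding w0_def wt_def by (rule key_alg[OF h1 h2])
  also have "\<dots> = complex_of_real (gm x * gm y * ((1-a)* norm w0^2 + (1-b)* norm wt^2 + (a+b-1)* (norm (v$1)^2 + norm (v$2)^2)))"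
    by (simp add: norm_sq_c MM_def)
  finally have eq: "qf v (gden a b t (x,y)) = \<dots>" .
  have "0 \<le> gm x * gm y * ((1-a)* norm w0^2 + (1-b)* norm wt^2 + (a+b-1)* (norm (v$1)^2 + norm (v$2)^2))"
    using assms by (intro mult_nonneg_nonneg gm_nonneg add_nonneg_nonneg) auto
  then show ?thesis unfolding eq by simp
qed

lemma sets_bb[simp]: "sets (borel \<Otimes>\<^sub>M borel :: (real \<times> real) measure) = sets borel"
  unfolding borel_prod ..

lemma sets_pp: "sets (lborel \<Otimes>\<^sub>M lborel :: (real \<times> real) measure) = sets borel"
  by (metis borel_prod sets_lborel sets_pair_measure_cong)

lemma hb_ind:
  fixes f :: "real \<Rightarrow> real"
  assumes "has_bochner_integral lborel f a" "X \<in> sets borel"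
  shows "has_bochner_integral lborel (\<lambda>x. indicator X x * f x) (LINT x:X|lborel. f x)"
proof -
  have "integrable lborel (\<lambda>x. indicator X x *\<^sub>R f x)"
    using assms by (intro integrable_mult_indicator) (auto simp: has_bochner_integral_iff)
  then show ?thesis by (simp add: set_lebesgue_integral_def has_bochner_integral_iff)
qed

definition GG :: "real \<Rightarrow> real \<Rightarrow> real \<Rightarrow> (real \<times> real) set \<Rightarrow> complex^2^2" where
  "GG a b t Z = (LINT p:Z|(lborel \<Otimes>\<^sub>M lborel). gden a b t p)"

lemma gden_hb: "has_bochner_integral (lborel \<Otimes>\<^sub>M lborel) (gden a b t)
   ((1*1) *\<^sub>R mat2 1 0 0 (of_real (a+b-1)) + (0*1) *\<^sub>R Bm a 0 + ((1/2)*1) *\<^sub>R Dm a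
    + (1*0) *\<^sub>R Bm b t + (1*(1/2)) *\<^sub>R Dm b)"
  unfolding gden_def[abs_def]
  by (intro has_bochner_integral_add has_bochner_integral_scaleR_left hb_prod hb0 hb1 hb2)

lemma gden_int: "integrable (lborel \<Otimes>\<^sub>M lborel) (gden a b t)"
  using gden_hb by (auto simp: has_bochner_integral_iff)

theorem mainTheorem7:
  fixes \<epsilon>0 \<epsilon>\<theta> \<theta> :: real
  assumes "0 \<le> \<epsilon>0" "\<epsilon>0 \<le> 1" "0 \<le> \<epsilon>\<theta>" "\<epsilon>\<theta> \<le> 1"
    and "\<epsilon>0 + \<epsilon>\<theta> \<ge> 1"
  shows "jointly_measurable (Qprono \<epsilon>0 0) (Qprono \<epsilon>\<theta> \<theta>)"
  unfolding jointly_measurable_def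
proof (intro exI conjI ballI)
  let ?G = "GG \<epsilon>0 \<epsilon>\<theta> \<theta>"
  let ?M = "lborel \<Otimes>\<^sub>M lborel :: (real \<times> real) measure"
  show "povm borel ?G"
    unfolding povm_def
  proof (intro conjI ballI allI impI)
    fix Z :: "(real \<times> real) set" assume Z: "Z \<in> sets borel"
    show "psd (?G Z)"
      unfolding psd_def
    proof (intro allI conjI)
      fix v :: "complex^2"
      have int: "integrable ?M (\<lambda>p. indicator Z p *\<^sub>R gden \<epsilon>0 \<epsilon>\<theta> \<theta> p)"
        using Z by (intro integrable_mult_indicator gden_int) (simp add: sets_pp)
      have bl1: "bounded_linear (\<lambda>A. Im (qf v A))"
        by (rule bounded_linear_compose[OF bounded_linear_Im qf_bl])
      have bl2: "bounded_linear (\<lambda>A. Re (qf v A))"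
        by (rule bounded_linear_compose[OF bounded_linear_Re qf_bl])
      have sc: "qf v (r *\<^sub>R A) = r *\<^sub>R qf v A" for r A
        using qf_bl[of v] by (simp add: bounded_linear.linear linear_scale)
      have hI: "Im (qf v (gden \<epsilon>0 \<epsilon>\<theta> \<theta> p)) = 0" and hR: "0 \<le> Re (qf v (gden \<epsilon>0 \<epsilon>\<theta> \<theta> p))" for p
        using gden_qf[OF assms, of v \<theta> "fst p" "snd p"] by auto
      have "Im (qf v (?G Z)) = (\<integral>p. Im (qf v (indicator Z p *\<^sub>R gden \<epsilon>0 \<epsilon>\<theta> \<theta> p)) \<partial>?M)"
        unfolding GG_def set_lebesgue_integral_def
        by (rule integral_bounded_linear[OF bl1 int, symmetric])
      also have "\<dots> = 0"
        by (simp add: sc hI)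
      finally show "Im (\<Sum>i\<in>UNIV. cnj (v $ i) * (?G Z *v v) $ i) = 0" by (simp add: qf_def)
      have "Re (qf v (?G Z)) = (\<integral>p. Re (qf v (indicator Z p *\<^sub>R gden \<epsilon>0 \<epsilon>\<theta> \<theta> p)) \<partial>?M)"
        unfolding GG_def set_lebesgue_integral_def
        by (rule integral_bounded_linear[OF bl2 int, symmetric])
      also have "0 \<le> \<dots>"
        by (intro integral_nonneg_AE AE_I2) (simp add: sc hR)
      finally show "0 \<le> Re (\<Sum>i\<in>UNIV. cnj (v $ i) * (?G Z *v v) $ i)" by (simp add: qf_def)
    qed
  next
    have "?G (space borel) = integral\<^sup>L ?M (gden \<epsilon>0 \<epsilon>\<theta> \<theta>)"
      by (simp add: GG_def set_lebesgue_integral_def)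
    also have "\<dots> = mat 1"
      using gden_hb[THEN has_bochner_integral_integral_eq, of \<epsilon>0 \<epsilon>\<theta> \<theta>]
      by (simp add: mat1_mat2 Bm_def Dm_def field_simps)
    finally show "?G (space borel) = mat 1" .
  next
    fix A :: "nat \<Rightarrow> (real \<times> real) set"
    assume A: "range A \<subseteq> sets borel" and dA: "disjoint_family A"
    have Am: "A i \<in> sets ?M" for i using A by (auto simp: sets_pp)
    have si: "set_integrable ?M S (gden \<epsilon>0 \<epsilon>\<theta> \<theta>)" if "S \<in> sets ?M" for S
      unfolding set_integrable_def using that by (intro integrable_mult_indicator gden_int)
    have "(\<lambda>n. LINT p:(\<Union>i<n. A i)|?M. gden \<epsilon>0 \<epsilon>\<theta> \<theta> p) \<longlonglongrightarrow> (LINT p:(\<Union>n. \<Union>i<n. A i)|?M. gden \<epsilon>0 \<epsilon>\<theta> \<theta> p)"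
    proof (intro set_integral_cont_up si)
      show "(\<Union>i<n. A i) \<in> sets ?M" for n using Am by (intro sets.finite_UN) auto
      then show "(\<Union>n. \<Union>i<n. A i) \<in> sets ?M" by blast
      show "incseq (\<lambda>n. \<Union>i<n. A i)" by (force simp: incseq_def)
    qed
    moreover have "(\<Union>n. \<Union>i<n. A i) = (\<Union>n. A n)" by blast
    moreover have "(LINT p:(\<Union>i<n. A i)|?M. gden \<epsilon>0 \<epsilon>\<theta> \<theta> p) = (\<Sum>i<n. ?G (A i))" for n
      unfolding GG_def
      by (rule set_integral_finite_Union) (use A in \<open>auto intro: si Am disjoint_family_on_mono[OF _ dA]\<close>)
    ultimately show "(\<lambda>n. ?G (A n)) sums ?G (\<Union>n. A n)"
      by (simp add: sums_def GG_def)
  qed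
next
  fix X :: "real set" assume X: "X \<in> sets borel"
  let ?G = "GG \<epsilon>0 \<epsilon>\<theta> \<theta>"
  let ?I = "\<lambda>f. LINT x:X|lborel. f x"
  have "?G (X \<times> UNIV) = integral\<^sup>L (lborel \<Otimes>\<^sub>M lborel) (\<lambda>p.
     ((indicator X (fst p) * gm (fst p)) * gm (snd p)) *\<^sub>R mat2 1 0 0 (of_real (\<epsilon>0+\<epsilon>\<theta>-1))
   + ((indicator X (fst p) * (gm (fst p) * fst p)) * gm (snd p)) *\<^sub>R Bm \<epsilon>0 0
   + ((indicator X (fst p) * (gm (fst p) * (fst p)\<^sup>2)) * gm (snd p)) *\<^sub>R Dm \<epsilon>0
   + ((indicator X (fst p) * gm (fst p)) * (gm (snd p) * snd p)) *\<^sub>R Bm \<epsilon>\<theta> \<theta>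
   + ((indicator X (fst p) * gm (fst p)) * (gm (snd p) * (snd p)\<^sup>2)) *\<^sub>R Dm \<epsilon>\<theta>)"
    unfolding GG_def set_lebesgue_integral_def
    by (rule Bochner_Integration.integral_cong[OF refl]) (simp add: gden_def indicator_times scaleR_add_right mult.assoc)
  also have "\<dots> = (?I gm * 1) *\<^sub>R mat2 1 0 0 (of_real (\<epsilon>0+\<epsilon>\<theta>-1)) + (?I (\<lambda>x. gm x * x) * 1) *\<^sub>R Bm \<epsilon>0 0
     + (?I (\<lambda>x. gm x * x\<^sup>2) * 1) *\<^sub>R Dm \<epsilon>0 + (?I gm * 0) *\<^sub>R Bm \<epsilon>\<theta> \<theta> + (?I gm * (1/2)) *\<^sub>R Dm \<epsilon>\<theta>"
    by (intro has_bochner_integral_integral_eq has_bochner_integral_add has_bochner_integral_scaleR_left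
        hb_prod hb0 hb1 hb2 hb_ind X) (rule hb0 hb1 hb2)+
  also have "\<dots> = Qprono \<epsilon>0 0 X"
  proof -
    have "Qprono \<epsilon>0 0 X = integral\<^sup>L lborel (\<lambda>x. (indicator X x * gm x) *\<^sub>R mat2 1 0 0 (of_real \<epsilon>0)
       + (indicator X x * (gm x * x)) *\<^sub>R Bm \<epsilon>0 0 + (indicator X x * (gm x * x\<^sup>2)) *\<^sub>R Dm \<epsilon>0)"
      unfolding Qprono_def set_lebesgue_integral_def
      by (rule Bochner_Integration.integral_cong[OF refl]) (simp add: qdens_dec2 scaleR_add_right mult.assoc)
    also have "\<dots> = ?I gm *\<^sub>R mat2 1 0 0 (of_real \<epsilon>0) + ?I (\<lambda>x. gm x * x) *\<^sub>R Bm \<epsilon>0 0 + ?I (\<lambda>x. gm x * x\<^sup>2) *\<^sub>R Dm \<epsilon>0"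
      by (intro has_bochner_integral_integral_eq has_bochner_integral_add has_bochner_integral_scaleR_left
        hb0 hb1 hb2 hb_ind X) (rule hb0 hb1 hb2)+
    finally show ?thesis by (simp add: Dm_def Bm_def algebra_simps)
  qed
  finally show "?G (X \<times> UNIV) = Qprono \<epsilon>0 0 X" .
next
  fix Y :: "real set" assume Y: "Y \<in> sets borel"
  let ?G = "GG \<epsilon>0 \<epsilon>\<theta> \<theta>"
  let ?I = "\<lambda>f. LINT x:Y|lborel. f x"
  have "?G (UNIV \<times> Y) = integral\<^sup>L (lborel \<Otimes>\<^sub>M lborel) (\<lambda>p.
     (gm (fst p) * (indicator Y (snd p) * gm (snd p))) *\<^sub>R mat2 1 0 0 (of_real (\<epsilon>0+\<epsilon>\<theta>-1))
   + ((gm (fst p) * fst p) * (indicator Y (snd p) * gm (snd p))) *\<^sub>R Bm \<epsilon>0 0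
   + ((gm (fst p) * (fst p)\<^sup>2) * (indicator Y (snd p) * gm (snd p))) *\<^sub>R Dm \<epsilon>0
   + (gm (fst p) * (indicator Y (snd p) * (gm (snd p) * snd p))) *\<^sub>R Bm \<epsilon>\<theta> \<theta>
   + (gm (fst p) * (indicator Y (snd p) * (gm (snd p) * (snd p)\<^sup>2))) *\<^sub>R Dm \<epsilon>\<theta>)"
    unfolding GG_def set_lebesgue_integral_def
    by (rule Bochner_Integration.integral_cong[OF refl]) (simp add: gden_def indicator_times scaleR_add_right mult_ac)
  also have "\<dots> = (1 * ?I gm) *\<^sub>R mat2 1 0 0 (of_real (\<epsilon>0+\<epsilon>\<theta>-1)) + (0 * ?I gm) *\<^sub>R Bm \<epsilon>0 0
     + ((1/2) * ?I gm) *\<^sub>R Dm \<epsilon>0 + (1 * ?I (\<lambda>x. gm x * x)) *\<^sub>R Bm \<epsilon>\<theta> \<theta> + (1 * ?I (\<lambda>x. gm x * x\<^sup>2)) *\<^sub>R Dm \<epsilon>\<theta>"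
    by (intro has_bochner_integral_integral_eq has_bochner_integral_add has_bochner_integral_scaleR_left
        hb_prod hb0 hb1 hb2 hb_ind Y) (rule hb0 hb1 hb2)+
  also have "\<dots> = Qprono \<epsilon>\<theta> \<theta> Y"
  proof -
    have "Qprono \<epsilon>\<theta> \<theta> Y = integral\<^sup>L lborel (\<lambda>x. (indicator Y x * gm x) *\<^sub>R mat2 1 0 0 (of_real \<epsilon>\<theta>)
       + (indicator Y x * (gm x * x)) *\<^sub>R Bm \<epsilon>\<theta> \<theta> + (indicator Y x * (gm x * x\<^sup>2)) *\<^sub>R Dm \<epsilon>\<theta>)"
      unfolding Qprono_def set_lebesgue_integral_def
      by (rule Bochner_Integration.integral_cong[OF refl]) (simp add: qdens_dec2 scaleR_add_right mult.assoc)
    also have "\<dots> = ?I gm *\<^sub>R mat2 1 0 0 (of_real \<epsilon>\<theta>) + ?I (\<lambda>x. gm x * x) *\<^sub>R Bm \<epsilon>\<theta> \<theta> + ?I (\<lambda>x. gm x * x\<^sup>2) *\<^sub>R Dm \<epsilon>\<theta>"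
      by (intro has_bochner_integral_integral_eq has_bochner_integral_add has_bochner_integral_scaleR_left
        hb0 hb1 hb2 hb_ind Y) (rule hb0 hb1 hb2)+
    finally show ?thesis by (simp add: Dm_def Bm_def algebra_simps)
  qed
  finally show "?G (UNIV \<times> Y) = Qprono \<epsilon>\<theta> \<theta> Y" .
qed

end
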